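(* Let $\boldsymbol{A},\boldsymbol{B},\boldsymbol{C}\in\mathbb{R}^2$ be three pairwise distinct points carrying scalar vorticities $\omega_A,\omega_B,\omega_C\in\mathbb{R}$. Define the effect of $\boldsymbol{A}$'s action on $\boldsymbol{B}$ on the interaction energy between $\boldsymbol{B}$ and $\boldsymbol{C}$ as \[D(\boldsymbol{A},\boldsymbol{B},\boldsymbol{C})=\nabla_{\boldsymbol{B}}\Big(\tfrac{1}{4\pi}\,\omega_B\,\omega_C\log\|\boldsymbol{B}-\boldsymbol{C}\|\Big)\cdot \boldsymbol{u}_{\boldsymbol{A}}(\boldsymbol{B}),\qquad \boldsymbol{u}_{\boldsymbol{A}}(\boldsymbol{B})=\frac{\omega_A}{2\pi}\,\frac{(\boldsymbol{B}-\boldsymbol{A})^{\perp}}{\|\boldsymbol{B}-\boldsymbol{A}\|^2},\] where $(x,y)^\perp=(-y,x)$, and the gradient is taken with respect to the position $\boldsymbol{B}$ with $\omega_B,\omega_C,\boldsymbol{C}$ held fixed. Then \[D(\boldsymbol{A},\boldsymbol{B},\boldsymbol{C})=-\,D(\boldsymbol{C},\boldsymbol{B},\boldsymbol{A}),\] i.e. $\boldsymbol{A}$'s action on $\boldsymbol{B}$ changes the interaction energy between $\boldsymbol{B}$ and $\boldsymbol{C}$ exactly oppositely to how $\boldsymbol{C}$'s action on $\boldsymbol{B}$ changes the interaction energy between $\boldsymbol{A}$ and $\boldsymbol{B}$.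
   Context: Setting: the 2-dimensional incompressible Euler equations in vorticity form, where the (scalar) vorticity is transported by the fluid (in coordinates advecting with the fluid, the vorticity of a fluid particle is constant and only its position changes), and velocity is obtained from vorticity by the 2D Biot–Savart law, so that the velocity induced at $\boldsymbol{B}$ by vorticity $\omega_A$ located at $\boldsymbol{A}$ is $\boldsymbol{u}_{\boldsymbol{A}}(\boldsymbol{B})$ as given. The 2D interaction energy between vortices $\omega(\boldsymbol{y})$ at $\boldsymbol{y}$ and $\omega(\boldsymbol{z})$ at $\boldsymbol{z}$ is $I_{2d}=\frac{1}{4\pi}\omega(\boldsymbol{y})\omega(\boldsymbol{z})\log\|\boldsymbol{z}-\boldsymbol{y}\|$. *)

theory Defs
  imports "HOL-Analysis.Analysis"
begin

text \<open>Points of the plane are modelled as \<open>real^2\<close>; components 1 and 2 are x and y.\<close>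

definition perp :: "real^2 \<Rightarrow> real^2" where
  "perp v = vector [- (v$2), v$1]"

definition vel :: "real \<Rightarrow> real^2 \<Rightarrow> real^2 \<Rightarrow> real^2" where
  "vel wA A B = (wA / (2 * pi)) *\<^sub>R ((1 / (norm (B - A))\<^sup>2) *\<^sub>R perp (B - A))"

definition I2d :: "real \<Rightarrow> real^2 \<Rightarrow> real \<Rightarrow> real^2 \<Rightarrow> real" where
  "I2d wy y wz z = 1 / (4 * pi) * wy * wz * ln (norm (z - y))"

definition Deff :: "real \<Rightarrow> real^2 \<Rightarrow> real \<Rightarrow> real^2 \<Rightarrow> real \<Rightarrow> real^2 \<Rightarrow> real" where
  "Deff wA A wB B wC C =
     (THE g. GDERIV (\<lambda>X. I2d wB X wC C) B :> g) \<bullet> vel wA A B"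

end

theory Submission
  imports Defs
begin

lemma grad_I:
  fixes B C :: "real^2"
  assumes "B \<noteq> C"
  shows "GDERIV (\<lambda>X. I2d wB X wC C) B :> ((1 / (4 * pi) * wB * wC / (norm (B - C))\<^sup>2) *\<^sub>R (B - C))"
proof -
  have n: "norm (C - B) > 0" using assms by simp
  have "((\<lambda>X. 1 / (4 * pi) * wB * wC * ln (sqrt ((C - X) \<bullet> (C - X)))) has_derivative
        (\<lambda>h. h \<bullet> ((1 / (4 * pi) * wB * wC / (norm (B - C))\<^sup>2) *\<^sub>R (B - C)))) (at B)"
    using n
    apply -
    apply (rule derivative_eq_intros refl | simp add: norm_eq_sqrt_inner[symmetric])+
    apply (rule ext)
    apply (simp add: inner_diff_left inner_diff_right inner_commute field_simps norm_minus_commute power2_eq_square)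
    done
  then show ?thesis unfolding gderiv_def I2d_def norm_eq_sqrt_inner by simp
qed

lemma grad_unique:
  assumes "GDERIV f x :> g" "GDERIV f x :> g'" shows "g = g'"
proof -
  have "(\<lambda>h. h \<bullet> g) = (\<lambda>h. h \<bullet> g')"
    using assms unfolding gderiv_def by (rule has_derivative_unique)
  then have "(g - g') \<bullet> g = (g - g') \<bullet> g'" by metis
  then have "(g - g') \<bullet> (g - g') = 0" by (simp add: inner_diff_right)
  then show ?thesis by simp
qed

lemma Deff_eq:
  assumes "B \<noteq> C"
  shows "Deff wA A wB B wC C = ((1 / (4 * pi) * wB * wC / (norm (B - C))\<^sup>2) *\<^sub>R (B - C)) \<bullet> vel wA A B"
  unfolding Deff_def
  by (rule arg_cong[where f="\<lambda>g. g \<bullet> vel wA A B"], rule the_equality, rule grad_I[OF assms],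
      rule grad_unique[OF _ grad_I[OF assms]])

theorem proposition1:
  fixes A B C :: "real^2" and wA wB wC :: real
  assumes "A \<noteq> B" and "B \<noteq> C" and "A \<noteq> C"
  shows "Deff wA A wB B wC C = - Deff wC C wB B wA A"
proof -
  have "Deff wA A wB B wC C = ((1 / (4 * pi) * wB * wC / (norm (B - C))\<^sup>2) *\<^sub>R (B - C)) \<bullet> vel wA A B"
    using assms by (simp add: Deff_eq)
  moreover have "Deff wC C wB B wA A = ((1 / (4 * pi) * wB * wA / (norm (B - A))\<^sup>2) *\<^sub>R (B - A)) \<bullet> vel wC C B"
    using assms by (intro Deff_eq) auto
  moreover have "(B - C) \<bullet> perp (B - A) = - ((B - A) \<bullet> perp (B - C))"
    unfolding perp_def inner_vec_def by (simp add: sum_2 vector_def algebra_simps)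
  ultimately show ?thesis
    unfolding vel_def inner_scaleR_left inner_scaleR_right
    by (simp only: inner_commute[of "B - A" "perp (B - C)"] inner_commute[of "B - C" "perp (B - A)"]) (simp add: field_simps)
qed

end
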